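(* If $G$ is an $n$-vertex graph with minimum degree at least $n/2$, then $rc(G)\le 3$.
   Context: All graphs are finite, simple and undirected. An edge-colored graph is rainbow connected if every two vertices are connected by a path whose edges have pairwise distinct colors. The rainbow connection $rc(G)$ of a connected graph $G$ is the smallest number of colors in an edge coloring making $G$ rainbow connected. *)

theory Defs
  imports Main
begin

definition simple_graph :: "'a set \<Rightarrow> 'a set set \<Rightarrow> bool" where
  "simple_graph V E \<longleftrightarrow> finite V \<and> (\<forall>e\<in>E. e \<subseteq> V \<and> card e = 2)"

definition degree :: "'a set set \<Rightarrow> 'a \<Rightarrow> nat" where
  "degree E v = card {e\<in>E. v \<in> e}"

fun path_edges :: "'a list \<Rightarrow> 'a set list" where
  "path_edges (x # y # xs) = {x, y} # path_edges (y # xs)"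
| "path_edges _ = []"

definition is_path :: "'a set \<Rightarrow> 'a set set \<Rightarrow> 'a list \<Rightarrow> 'a \<Rightarrow> 'a \<Rightarrow> bool" where
  "is_path V E p u v \<longleftrightarrow> p \<noteq> [] \<and> hd p = u \<and> last p = v \<and> distinct p
     \<and> set p \<subseteq> V \<and> set (path_edges p) \<subseteq> E"

definition connected_graph :: "'a set \<Rightarrow> 'a set set \<Rightarrow> bool" where
  "connected_graph V E \<longleftrightarrow> (\<forall>u\<in>V. \<forall>v\<in>V. \<exists>p. is_path V E p u v)"

definition rainbow_connected :: "'a set \<Rightarrow> 'a set set \<Rightarrow> ('a set \<Rightarrow> nat) \<Rightarrow> bool" where
  "rainbow_connected V E c \<longleftrightarrow>
     (\<forall>u\<in>V. \<forall>v\<in>V. \<exists>p. is_path V E p u v \<and> distinct (map c (path_edges p)))"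

text \<open>Rainbow connection number: least k such that some colouring of the edges with
  colours from {0..<k} is rainbow connected (defined for connected graphs).\<close>
definition rc :: "'a set \<Rightarrow> 'a set set \<Rightarrow> nat" where
  "rc V E = (LEAST k. \<exists>c. (\<forall>e\<in>E. c e < k) \<and> rainbow_connected V E c)"

end

theory Submission
  imports Defs
begin

definition nbr :: "'a set set \<Rightarrow> 'a \<Rightarrow> 'a set" where
  "nbr E x = {y. {x,y} \<in> E}"

definition matching :: "'a set set \<Rightarrow> ('a \<times> 'a) set \<Rightarrow> bool" where
  "matching E M \<longleftrightarrow> (\<forall>p\<in>M. {fst p, snd p} \<in> E) \<and> inj_on fst M \<and> inj_on snd M
     \<and> fst ` M \<inter> snd ` M = {}"

definition mate :: "('a \<times> 'a) set \<Rightarrow> 'a \<Rightarrow> 'a \<Rightarrow> bool" where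
  "mate M x y \<longleftrightarrow> (x,y) \<in> M \<or> (y,x) \<in> M"

definition col :: "('a \<times> 'a) set \<Rightarrow> 'a set \<Rightarrow> nat" where
  "col M e = (if \<exists>x y. (x,y) \<in> M \<and> e = {x,y} then 2
     else if \<exists>x y. e = {x,y} \<and> x \<in> snd ` M \<and> y \<notin> snd ` M then 1 else 0)"

lemma col_lt: "col M e < 3"
  unfolding col_def by auto

lemma col_mate: "mate M x y \<Longrightarrow> col M {x,y} = 2"
  unfolding col_def mate_def by (auto simp: insert_commute)

lemma col_nonmate: "x \<noteq> y \<Longrightarrow> \<not> mate M x y \<Longrightarrow>
   col M {x,y} = (if (x \<in> snd ` M) = (y \<in> snd ` M) then 0 else 1)"
  unfolding col_def mate_def by (auto simp: doubleton_eq_iff)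

lemma mate_sym: "mate M x y \<Longrightarrow> mate M y x"
  unfolding mate_def by auto

lemma mate_unique:
  assumes m: "matching E M" and a: "mate M x y" and b: "mate M x z" shows "y = z"
proof -
  have i1: "inj_on fst M" and i2: "inj_on snd M" and d: "fst ` M \<inter> snd ` M = {}"
    using m unfolding matching_def by auto
  show ?thesis
  proof (cases "(x,y) \<in> M")
    case True
    show ?thesis
    proof (cases "(x,z) \<in> M")
      case True
      then show ?thesis using \<open>(x,y) \<in> M\<close> i1 unfolding inj_on_def by force
    next
      case False
      then have "(z,x) \<in> M" using b unfolding mate_def by auto
      then have "x \<in> snd ` M" by force
      moreover have "x \<in> fst ` M" using \<open>(x,y) \<in> M\<close> by force
      ultimately show ?thesis using d by blast
    qed
  next
    case False
    then have yx: "(y,x) \<in> M" using a unfolding mate_def by auto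
    show ?thesis
    proof (cases "(z,x) \<in> M")
      case True
      then show ?thesis using yx i2 unfolding inj_on_def by force
    next
      case False
      then have "(x,z) \<in> M" using b unfolding mate_def by auto
      then have "x \<in> fst ` M" by force
      moreover have "x \<in> snd ` M" using yx by force
      ultimately show ?thesis using d by blast
    qed
  qed
qed

lemma mate_edge: "matching E M \<Longrightarrow> mate M x y \<Longrightarrow> {x,y} \<in> E"
  unfolding matching_def mate_def by (auto simp: insert_commute)

lemma mate_bits: "matching E M \<Longrightarrow> mate M x y \<Longrightarrow> (x \<in> snd ` M) \<noteq> (y \<in> snd ` M)"
  unfolding matching_def mate_def by force

lemma matched_mate: "x \<in> fst ` M \<union> snd ` M \<Longrightarrow> \<exists>y. mate M x y"
  unfolding mate_def by force

lemma path_edges_snoc: "path_edges (xs @ [y,z]) = path_edges (xs @ [y]) @ [{y,z}]"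
  by (induction xs rule: path_edges.induct) auto

lemma path_edges_rev: "path_edges (rev p) = rev (path_edges p)"
proof (induction p rule: path_edges.induct)
  case (1 x y xs)
  have "path_edges (rev (x # y # xs)) = path_edges (rev xs @ [y, x])" by simp
  also have "\<dots> = path_edges (rev xs @ [y]) @ [{y,x}]" by (rule path_edges_snoc)
  also have "\<dots> = rev (path_edges (x # y # xs))" using 1 by (simp add: insert_commute)
  finally show ?case .
qed auto

lemma is_path_rev: "is_path V E p u v \<Longrightarrow> is_path V E (rev p) v u"
  unfolding is_path_def by (auto simp: path_edges_rev hd_rev last_rev)

locale dg =
  fixes V :: "'a set" and E :: "'a set set"
  assumes sg: "simple_graph V E"
    and dg: "\<forall>v\<in>V. 2 * degree E v \<ge> card V"
begin

lemma finV: "finite V" using sg unfolding simple_graph_def by auto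

lemma edge_in: "{x,y} \<in> E \<Longrightarrow> x \<in> V \<and> y \<in> V \<and> x \<noteq> y"
  using sg unfolding simple_graph_def by fastforce

lemma nbr_sub: "nbr E x \<subseteq> V - {x}"
  unfolding nbr_def using edge_in by auto

lemma fin_nbr: "finite (nbr E x)"
  using nbr_sub finV by (meson finite_Diff finite_subset)

lemma degree_nbr: "degree E x = card (nbr E x)"
proof -
  have "{e\<in>E. x \<in> e} = (\<lambda>y. {x,y}) ` nbr E x"
  proof
    show "{e\<in>E. x \<in> e} \<subseteq> (\<lambda>y. {x,y}) ` nbr E x"
    proof
      fix e assume e: "e \<in> {e\<in>E. x \<in> e}"
      then have "card e = 2" using sg unfolding simple_graph_def by auto
      then obtain a b where ab: "e = {a,b}" "a \<noteq> b" by (auto simp: card_2_iff)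
      show "e \<in> (\<lambda>y. {x,y}) ` nbr E x"
      proof (cases "x = a")
        case True
        then show ?thesis using e ab unfolding nbr_def by auto
      next
        case False
        then have "x = b" using e ab by auto
        then show ?thesis using e ab unfolding nbr_def by (auto simp: insert_commute)
      qed
    qed
  qed (auto simp: nbr_def)
  moreover have "inj_on (\<lambda>y. {x,y}) (nbr E x)"
    by (auto simp: inj_on_def doubleton_eq_iff)
  ultimately show ?thesis unfolding degree_def by (simp add: card_image)
qed

lemma deg2: "x \<in> V \<Longrightarrow> card V \<le> 2 * card (nbr E x)"
  using dg degree_nbr by auto

lemma common2:
  assumes "a \<in> V" "b \<in> V" "a \<noteq> b" "{a,b} \<notin> E"
  shows "2 \<le> card (nbr E a \<inter> nbr E b)"
proof -
  have "nbr E a \<union> nbr E b \<subseteq> V - {a,b}"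
  proof
    fix x assume x: "x \<in> nbr E a \<union> nbr E b"
    show "x \<in> V - {a,b}"
    proof (cases "x \<in> nbr E a")
      case True
      then have "{a,x} \<in> E" unfolding nbr_def by simp
      then show ?thesis using edge_in[of a x] assms(4) by auto
    next
      case False
      then have "{b,x} \<in> E" using x unfolding nbr_def by simp
      then show ?thesis using edge_in[of b x] assms(4) by (auto simp: insert_commute)
    qed
  qed
  then have "card (nbr E a \<union> nbr E b) \<le> card (V - {a,b})"
    using finV by (intro card_mono) auto
  moreover have "card (V - {a,b}) = card V - 2"
    using assms finV by (subst card_Diff_subset) auto
  moreover have "card (nbr E a \<union> nbr E b) + card (nbr E a \<inter> nbr E b) = card (nbr E a) + card (nbr E b)"
    using card_Un_Int[OF fin_nbr fin_nbr] by simp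
  moreover have "card V \<le> card (nbr E a) + card (nbr E b)" using deg2[OF assms(1)] deg2[OF assms(2)] by linarith
  moreover have "2 \<le> card V"
  proof -
    have "card {a,b} \<le> card V" using assms finV by (intro card_mono) auto
    then show ?thesis using assms by simp
  qed
  ultimately show ?thesis by linarith
qed

lemma common_nb:
  assumes "a \<in> V" "b \<in> V" "a \<noteq> b" "{a,b} \<notin> E"
  shows "\<exists>w. {a,w} \<in> E \<and> {w,b} \<in> E"
proof -
  have "nbr E a \<inter> nbr E b \<noteq> {}" using common2[OF assms] by (intro notI) simp
  then show ?thesis unfolding nbr_def by (auto simp: insert_commute)
qed

lemma common_avoid:
  assumes "a \<in> V" "b \<in> V" "a \<noteq> b" "{a,b} \<notin> E"
  shows "\<exists>w. {a,w} \<in> E \<and> {w,b} \<in> E \<and> w \<noteq> z"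
proof -
  have "2 \<le> card (nbr E a \<inter> nbr E b)" by (rule common2[OF assms])
  have "\<not> (nbr E a \<inter> nbr E b \<subseteq> {z})"
  proof
    assume "nbr E a \<inter> nbr E b \<subseteq> {z}"
    then have "card (nbr E a \<inter> nbr E b) \<le> card {z}" by (intro card_mono) auto
    then show False using \<open>2 \<le> card (nbr E a \<inter> nbr E b)\<close> by simp
  qed
  then obtain w where "w \<in> nbr E a \<inter> nbr E b" "w \<noteq> z" by blast
  then show ?thesis unfolding nbr_def by (auto simp: insert_commute)
qed


lemma match_sub: "matching E M \<Longrightarrow> M \<subseteq> V \<times> V"
  unfolding matching_def using edge_in by fastforce

lemma fin_match: "matching E M \<Longrightarrow> finite M"
  using match_sub finV by (meson finite_SigmaI finite_subset)

lemma aug1: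
  assumes m: "matching E M" and a: "a \<notin> fst ` M \<union> snd ` M" and b: "b \<notin> fst ` M \<union> snd ` M"
    and ab: "{a,b} \<in> E"
  shows "matching E (insert (a,b) M) \<and> card M < card (insert (a,b) M)"
proof
  have "a \<noteq> b" using edge_in[OF ab] by simp
  then show "matching E (insert (a,b) M)"
    using m a b ab unfolding matching_def inj_on_def by auto
  have "(a,b) \<notin> M" using a by force
  then show "card M < card (insert (a,b) M)" using fin_match[OF m] by simp
qed

lemma aug3:
  assumes m: "matching E M" and u: "u \<notin> fst ` M \<union> snd ` M" and v: "v \<notin> fst ` M \<union> snd ` M"
    and uv: "u \<noteq> v" and p: "p \<in> M" and e1: "{u, fst p} \<in> E" and e2: "{v, snd p} \<in> E"
  shows "\<exists>M'. matching E M' \<and> card M < card M'"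
proof -
  obtain x y where pxy: "p = (x,y)" by (cases p)
  define M' where "M' = insert (u,x) (insert (v,y) (M - {p}))"
  have i1: "inj_on fst M" and i2: "inj_on snd M" and d: "fst ` M \<inter> snd ` M = {}"
    and ed: "\<forall>q\<in>M. {fst q, snd q} \<in> E"
    using m unfolding matching_def by auto
  have pM: "(x,y) \<in> M" using p pxy by simp
  have "{x,y} \<in> E" using ed pM by fastforce
  then have xy: "x \<noteq> y" using edge_in by blast
  have xl: "x \<in> fst ` M" using pM by (metis fst_conv image_eqI)
  have yr: "y \<in> snd ` M" using pM by (metis snd_conv image_eqI)
  have xnr: "x \<notin> snd ` M" using xl d by blast
  have ynl: "y \<notin> fst ` M" using yr d by blast
  have xo: "\<forall>q\<in>M - {p}. fst q \<noteq> x"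
  proof
    fix q assume q: "q \<in> M - {p}"
    show "fst q \<noteq> x"
    proof
      assume "fst q = x"
      then have "fst q = fst p" using pxy by simp
      then have "q = p" using inj_onD[OF i1] q p by blast
      then show False using q by simp
    qed
  qed
  have yo: "\<forall>q\<in>M - {p}. snd q \<noteq> y"
  proof
    fix q assume q: "q \<in> M - {p}"
    show "snd q \<noteq> y"
    proof
      assume "snd q = y"
      then have "snd q = snd p" using pxy by simp
      then have "q = p" using inj_onD[OF i2] q p by blast
      then show False using q by simp
    qed
  qed
  have "matching E M'"
  proof -
    have "\<forall>q\<in>M'. {fst q, snd q} \<in> E" using ed e1 e2 unfolding M'_def by (simp add: pxy)
    moreover have "inj_on fst M'"
    proof -
      have "inj_on fst (M - {p})" using m unfolding matching_def by (meson Diff_subset inj_on_subset)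
      moreover have "v \<notin> fst ` (M - {p})" using v by blast
      moreover have "u \<notin> fst ` (insert (v,y) (M - {p}))" using u uv by force
      ultimately show ?thesis unfolding M'_def by (auto simp add: inj_on_insert)
    qed
    moreover have "inj_on snd M'"
    proof -
      have "inj_on snd (M - {p})" using m unfolding matching_def by (meson Diff_subset inj_on_subset)
      moreover have "y \<notin> snd ` (M - {p})" using yo by blast
      moreover have "x \<notin> snd ` (insert (v,y) (M - {p}))" using xnr xy by force
      ultimately show ?thesis unfolding M'_def by (auto simp add: inj_on_insert)
    qed
    moreover have "fst ` M' \<inter> snd ` M' = {}"
    proof -
      have xm: "x \<in> fst ` M" and ym: "y \<in> snd ` M" using p pxy by force+
      have dis: "fst ` M \<inter> snd ` M = {}" using m unfolding matching_def by blast
      have e1: "fst ` M' = {u,v} \<union> fst ` (M - {p})" and e2: "snd ` M' = {x,y} \<union> snd ` (M - {p})"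
        unfolding M'_def by auto
      have f1: "u \<noteq> x" "u \<noteq> y" "v \<noteq> x" "v \<noteq> y" using u v xm ym by blast+
      have f2: "u \<notin> snd ` (M - {p})" "v \<notin> snd ` (M - {p})" using u v by blast+
      have f3: "x \<notin> fst ` (M - {p})" using xo by blast
      have f4: "y \<notin> fst ` (M - {p})" using ynl by blast
      have f5: "fst ` (M - {p}) \<inter> snd ` (M - {p}) = {}" using dis by blast
      show ?thesis unfolding e1 e2 using f1 f2 f3 f4 f5 by auto
    qed
    ultimately show ?thesis unfolding matching_def by blast
  qed
  moreover have "card M < card M'"
  proof -
    have f: "finite M" by (rule fin_match[OF m])
    have n1: "(v,y) \<notin> M - {p}" using v by force
    have n2: "(u,x) \<notin> insert (v,y) (M - {p})" using u uv by force
    have "card M' = Suc (Suc (card (M - {p})))"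
      unfolding M'_def using f n1 n2 by simp
    moreover have "card (M - {p}) = card M - 1" using f p by simp
    moreover have "card M \<ge> 1" using f p by (metis One_nat_def Suc_leI card_gt_0_iff empty_iff)
    ultimately show ?thesis by linarith
  qed
  ultimately show ?thesis by blast
qed

lemma augment:
  assumes m: "matching E M" and uV: "u \<in> V" and vV: "v \<in> V" and uv: "u \<noteq> v"
    and u: "u \<notin> fst ` M \<union> snd ` M" and v: "v \<notin> fst ` M \<union> snd ` M"
  shows "\<exists>M'. matching E M' \<and> card M < card M'"
proof (rule ccontr)
  assume nex: "\<not> ?thesis"
  have ne: "{u,v} \<notin> E" using aug1[OF m u v] nex by blast
  have Nu: "nbr E u \<subseteq> fst ` M \<union> snd ` M"
    using aug1[OF m u] nex unfolding nbr_def by blast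
  have Nv: "nbr E v \<subseteq> fst ` M \<union> snd ` M"
    using aug1[OF m v] nex unfolding nbr_def by blast
  have c1: "\<not> (\<exists>p\<in>M. fst p \<in> nbr E u \<and> snd p \<in> nbr E v)"
    using aug3[OF m u v uv] nex unfolding nbr_def by blast
  have c2: "\<not> (\<exists>p\<in>M. fst p \<in> nbr E v \<and> snd p \<in> nbr E u)"
    using aug3[OF m v u] uv nex unfolding nbr_def by blast
  have f: "finite M" by (rule fin_match[OF m])
  have ifst: "inj_on fst M" and isnd: "inj_on snd M" and dis: "fst ` M \<inter> snd ` M = {}"
    using m unfolding matching_def by auto
  have cL: "card (A \<inter> fst ` M) = card {p\<in>M. fst p \<in> A}" for A
  proof -
    have "fst ` {p\<in>M. fst p \<in> A} = A \<inter> fst ` M" by auto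
    moreover have "inj_on fst {p\<in>M. fst p \<in> A}" using ifst by (rule inj_on_subset) auto
    ultimately show ?thesis by (metis card_image)
  qed
  have cR: "card (A \<inter> snd ` M) = card {p\<in>M. snd p \<in> A}" for A
  proof -
    have "snd ` {p\<in>M. snd p \<in> A} = A \<inter> snd ` M" by auto
    moreover have "inj_on snd {p\<in>M. snd p \<in> A}" using isnd by (rule inj_on_subset) auto
    ultimately show ?thesis by (metis card_image)
  qed
  have split: "card A = card (A \<inter> fst ` M) + card (A \<inter> snd ` M)"
    if "A \<subseteq> fst ` M \<union> snd ` M" for A
  proof -
    have fA: "finite A" using that f by (meson finite_Un finite_imageI finite_subset)
    have "A = (A \<inter> fst ` M) \<union> (A \<inter> snd ` M)" using that by auto
    then have "card A = card ((A \<inter> fst ` M) \<union> (A \<inter> snd ` M))" by simp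
    also have "\<dots> = card (A \<inter> fst ` M) + card (A \<inter> snd ` M)"
      using fA dis by (intro card_Un_disjoint) auto
    finally show ?thesis .
  qed
  have d1: "card {p\<in>M. fst p \<in> nbr E u} + card {p\<in>M. snd p \<in> nbr E v} \<le> card M"
  proof -
    have "card {p\<in>M. fst p \<in> nbr E u} + card {p\<in>M. snd p \<in> nbr E v}
        = card ({p\<in>M. fst p \<in> nbr E u} \<union> {p\<in>M. snd p \<in> nbr E v})"
      using f c1 by (intro card_Un_disjoint[symmetric]) auto
    also have "\<dots> \<le> card M" using f by (intro card_mono) auto
    finally show ?thesis .
  qed
  have d2: "card {p\<in>M. fst p \<in> nbr E v} + card {p\<in>M. snd p \<in> nbr E u} \<le> card M"
  proof -
    have "card {p\<in>M. fst p \<in> nbr E v} + card {p\<in>M. snd p \<in> nbr E u}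
        = card ({p\<in>M. fst p \<in> nbr E v} \<union> {p\<in>M. snd p \<in> nbr E u})"
      using f c2 by (intro card_Un_disjoint[symmetric]) auto
    also have "\<dots> \<le> card M" using f by (intro card_mono) auto
    finally show ?thesis .
  qed
  have "card (nbr E u) + card (nbr E v) \<le> 2 * card M"
    using split[OF Nu] split[OF Nv] cL cR d1 d2 by simp
  moreover have "card (fst ` M) = card M" "card (snd ` M) = card M"
    using ifst isnd by (auto simp: card_image)
  moreover have "card (fst ` M \<union> snd ` M) = card (fst ` M) + card (snd ` M)"
    using f dis by (intro card_Un_disjoint) auto
  moreover have "card (fst ` M \<union> snd ` M) \<le> card (V - {u,v})"
  proof (rule card_mono)
    show "finite (V - {u,v})" using finV by simp
    show "fst ` M \<union> snd ` M \<subseteq> V - {u,v}" using match_sub[OF m] u v by force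
  qed
  moreover have "card (V - {u,v}) = card V - 2"
    using uV vV uv finV by (subst card_Diff_subset) auto
  moreover have "card V \<le> card (nbr E u) + card (nbr E v)" using deg2[OF uV] deg2[OF vV] by linarith
  moreover have "2 \<le> card V"
  proof -
    have "card {u,v} \<le> card V" using uV vV finV by (intro card_mono) auto
    then show ?thesis using uv by simp
  qed
  ultimately show False by linarith
qed

lemma near_perfect:
  "\<exists>M. matching E M \<and> (\<forall>x\<in>V. \<forall>y\<in>V. x \<notin> fst ` M \<union> snd ` M \<longrightarrow> y \<notin> fst ` M \<union> snd ` M \<longrightarrow> x = y)"
proof -
  have m0: "matching E {}" unfolding matching_def by auto
  have bd: "\<forall>M. matching E M \<longrightarrow> card M < Suc (card (V \<times> V))"
  proof (intro allI impI)
    fix M assume "matching E M"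
    then have "card M \<le> card (V \<times> V)" using match_sub finV by (intro card_mono) auto
    then show "card M < Suc (card (V \<times> V))" by simp
  qed
  obtain M where M: "matching E M" and mx: "\<forall>M'. matching E M' \<longrightarrow> card M' \<le> card M"
    using ex_has_greatest_nat[of "matching E" "{}" card, OF m0 bd] by blast
  have "\<forall>x\<in>V. \<forall>y\<in>V. x \<notin> fst ` M \<union> snd ` M \<longrightarrow> y \<notin> fst ` M \<union> snd ` M \<longrightarrow> x = y"
  proof (intro ballI impI)
    fix x y assume "x \<in> V" "y \<in> V" "x \<notin> fst ` M \<union> snd ` M" "y \<notin> fst ` M \<union> snd ` M"
    show "x = y"
    proof (rule ccontr)
      assume "x \<noteq> y"
      then obtain M' where "matching E M'" "card M < card M'"
        using augment[OF M \<open>x \<in> V\<close> \<open>y \<in> V\<close>] \<open>x \<notin> _\<close> \<open>y \<notin> _\<close> by blast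
      then show False using mx by (meson not_le)
    qed
  qed
  then show ?thesis using M by blast
qed


lemma half:
  assumes m: "matching E M" and uV: "u \<in> V" and vV: "v \<in> V" and uv: "u \<noteq> v"
    and ne: "{u,v} \<notin> E" and bits: "(u \<in> snd ` M) = (v \<in> snd ` M)" and mu: "mate M u u'"
  shows "\<exists>p. is_path V E p u v \<and> distinct (map (col M) (path_edges p))"
proof -
  have euu: "{u,u'} \<in> E" by (rule mate_edge[OF m mu])
  have u'V: "u' \<in> V" and uu': "u \<noteq> u'" using edge_in[OF euu] by auto
  have u'v: "u' \<noteq> v" using euu ne by auto
  have c1: "col M {u,u'} = 2" by (rule col_mate[OF mu])
  have bu': "(u' \<in> snd ` M) \<noteq> (v \<in> snd ` M)" using mate_bits[OF m mu] bits by simp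
  show ?thesis
  proof (cases "{u',v} \<in> E")
    case True
    have nm: "\<not> mate M u' v"
    proof
      assume h: "mate M u' v"
      from mate_unique[OF m mate_sym[OF mu] h] uv show False by simp
    qed
    have "col M {u',v} \<noteq> 2" using col_nonmate[OF u'v nm] by simp
    moreover have "is_path V E [u,u',v] u v"
      unfolding is_path_def using uV vV u'V uu' uv u'v euu True by auto
    ultimately show ?thesis using c1 by (intro exI[of _ "[u,u',v]"]) auto
  next
    case False
    have "\<exists>w. {u',w} \<in> E \<and> {w,v} \<in> E \<and> \<not> mate M w v"
    proof (cases "\<exists>z. mate M v z")
      case True
      then obtain z where z: "mate M v z" by blast
      obtain w where w: "{u',w} \<in> E" "{w,v} \<in> E" "w \<noteq> z"
        using common_avoid[OF u'V vV u'v False] by blast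
      have "\<not> mate M w v"
      proof
        assume h: "mate M w v"
        from mate_unique[OF m z mate_sym[OF h]] w(3) show False by simp
      qed
      then show ?thesis using w by blast
    next
      case False
      obtain w where w: "{u',w} \<in> E" "{w,v} \<in> E"
        using common_nb[OF u'V vV u'v \<open>{u',v} \<notin> E\<close>] by blast
      moreover have "\<not> mate M w v"
      proof
        assume h: "mate M w v"
        then show False using False mate_sym[OF h] by blast
      qed
      ultimately show ?thesis by blast
    qed
    then obtain w where w1: "{u',w} \<in> E" and w2: "{w,v} \<in> E" and nmw: "\<not> mate M w v" by blast
    have wV: "w \<in> V" and u'w: "u' \<noteq> w" using edge_in[OF w1] by auto
    have wv: "w \<noteq> v" using edge_in[OF w2] by auto
    have uw: "u \<noteq> w" using w2 ne by auto
    have nm1: "\<not> mate M u' w"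
    proof
      assume h: "mate M u' w"
      from mate_unique[OF m mate_sym[OF mu] h] uw show False by simp
    qed
    have "col M {u',w} \<noteq> col M {w,v}" "col M {u',w} \<noteq> 2" "col M {w,v} \<noteq> 2"
      using col_nonmate[OF u'w nm1] col_nonmate[OF wv nmw] bu' by auto
    moreover have "is_path V E [u,u',w,v] u v"
      unfolding is_path_def using uV vV u'V wV uu' uv u'v uw u'w wv euu w1 w2 by auto
    ultimately show ?thesis using c1 by (intro exI[of _ "[u,u',w,v]"]) auto
  qed
qed

lemma rainbow_pair:
  assumes m: "matching E M"
    and np: "\<forall>x\<in>V. \<forall>y\<in>V. x \<notin> fst ` M \<union> snd ` M \<longrightarrow> y \<notin> fst ` M \<union> snd ` M \<longrightarrow> x = y"
    and uV: "u \<in> V" and vV: "v \<in> V"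
  shows "\<exists>p. is_path V E p u v \<and> distinct (map (col M) (path_edges p))"
proof (cases "u = v")
  case True
  have "is_path V E [u] u v" unfolding is_path_def using uV True by auto
  then show ?thesis by (intro exI[of _ "[u]"]) auto
next
  case uv: False
  show ?thesis
  proof (cases "{u,v} \<in> E")
    case True
    have "is_path V E [u,v] u v" unfolding is_path_def using uV vV uv True by auto
    then show ?thesis by (intro exI[of _ "[u,v]"]) auto
  next
    case ne: False
    show ?thesis
    proof (cases "(u \<in> snd ` M) = (v \<in> snd ` M)")
      case bits: True
      show ?thesis
      proof (cases "u \<in> fst ` M \<union> snd ` M")
        case True
        then obtain u' where mu: "mate M u u'" using matched_mate[OF True] by blast
        show ?thesis by (rule half[OF m uV vV uv ne bits mu])
      next
        case False
        have vm: "v \<in> fst ` M \<union> snd ` M"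
        proof (rule ccontr)
          assume "v \<notin> fst ` M \<union> snd ` M"
          then have "u = v" using np[rule_format, OF uV vV False] by simp
          then show False using uv by simp
        qed
        obtain v' where v': "mate M v v'" using matched_mate[OF vm] by blast
        have ne': "{v,u} \<notin> E" using ne by (simp add: insert_commute)
        have vu: "v \<noteq> u" using uv by simp
        have bits': "(v \<in> snd ` M) = (u \<in> snd ` M)" using bits by simp
        obtain p where p: "is_path V E p v u" "distinct (map (col M) (path_edges p))"
          using half[OF m vV uV vu ne' bits' v'] by blast
        have "is_path V E (rev p) u v" by (rule is_path_rev[OF p(1)])
        moreover have "distinct (map (col M) (path_edges (rev p)))"
        proof -
          have "map (col M) (path_edges (rev p)) = rev (map (col M) (path_edges p))"
            by (simp add: path_edges_rev rev_map)
          then show ?thesis using p(2) by simp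
        qed
        ultimately show ?thesis by blast
      qed
    next
      case bits: False
      obtain w where w1: "{u,w} \<in> E" and w2: "{w,v} \<in> E" using common_nb[OF uV vV uv ne] by blast
      have wV: "w \<in> V" and uw: "u \<noteq> w" using edge_in[OF w1] by auto
      have wv: "w \<noteq> v" using edge_in[OF w2] by auto
      have "col M {u,w} \<noteq> col M {w,v}"
      proof (cases "mate M u w")
        case True
        have "\<not> mate M w v"
        proof
          assume h: "mate M w v"
          from mate_unique[OF m mate_sym[OF True] h] uv show False by simp
        qed
        then show ?thesis using col_mate[OF True] col_nonmate[OF wv] by simp
      next
        case False
        show ?thesis
        proof (cases "mate M w v")
          case True
          then show ?thesis using col_mate[OF True] col_nonmate[OF uw False] by simp
        next
          case False2: False
          then show ?thesis using col_nonmate[OF uw False] col_nonmate[OF wv False2] bits by auto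
        qed
      qed
      moreover have "is_path V E [u,w,v] u v"
        unfolding is_path_def using uV vV wV uv uw wv w1 w2 by auto
      ultimately show ?thesis by (intro exI[of _ "[u,w,v]"]) auto
    qed
  qed
qed

lemma main: "connected_graph V E \<and> rc V E \<le> 3"
proof -
  obtain M where m: "matching E M"
    and np: "\<forall>x\<in>V. \<forall>y\<in>V. x \<notin> fst ` M \<union> snd ` M \<longrightarrow> y \<notin> fst ` M \<union> snd ` M \<longrightarrow> x = y"
    using near_perfect by blast
  have rb: "rainbow_connected V E (col M)"
    unfolding rainbow_connected_def using rainbow_pair[OF m np] by blast
  have "connected_graph V E"
    using rb unfolding rainbow_connected_def connected_graph_def by blast
  moreover have "\<exists>c. (\<forall>e\<in>E. c e < 3) \<and> rainbow_connected V E c"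
    using rb col_lt by blast
  then have "rc V E \<le> 3" unfolding rc_def by (rule Least_le)
  ultimately show ?thesis by blast
qed

end

theorem corollary1p5:
  fixes V :: "'a set" and E :: "'a set set"
  assumes "simple_graph V E"
    and "\<forall>v\<in>V. 2 * degree E v \<ge> card V"
  shows "connected_graph V E \<and> rc V E \<le> 3"
proof -
  interpret dg V E using assms by unfold_locales
  show ?thesis by (rule main)
qed

end
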